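(* Let $f:\mathcal{X}\to\mathbb{R}$ be any function, let $\varphi:\mathcal{X}\to\mathcal{X}$ be any map, and let $\mathcal{A}\subset\mathcal{X}$ be a finite set such that $D:=\sum_{x\in\mathcal{A}}|f(\varphi(x))-f(x)|^2\neq 0$. Define $$WCM(\varphi;f):=1-\sqrt{\frac{\min_{\pi\in \Pi(\mathcal{A})}\sum_{x\in\mathcal{A}}|f(\varphi(\pi(x)))-f(x)|^2}{D}},$$ where $\Pi(\mathcal{A})$ is the set of all permutations (bijections) $\pi:\mathcal{A}\to\mathcal{A}$. Then $WCM(\varphi;f)\in[0,1]$. Moreover: (i) $WCM(\varphi;f)=0$ if and only if the natural pairing $\{(f(x),f(\varphi(x)))\}_{x\in\mathcal{A}}$ maximizes the covariance among all pairings $\{(f(x),f(\varphi(\pi(x))))\}_{x\in\mathcal{A}}$, $\pi\in\Pi(\mathcal{A})$ (equivalently, the identity permutation attains the minimum in the numerator); (ii) $WCM(\varphi;f)=1$ if and only if there exists a permutation $\pi\in\Pi(\mathcal{A})$ which is not the identity such that $f(x)=f(\varphi(\pi(x)))$ for every $x\in\mathcal{A}$; (iii) for every $\lambda>0$, $WCM(\varphi;f)=WCM(\varphi;\lambda f)$.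
   Context: Here $f$ plays the role of a fixed black-box real-valued predictor, $\varphi$ a perturbation of inputs, and $\mathcal{A}$ a finite auditing set; $WCM$ is called the Wasserstein Coherence Metric. *)

theory Defs
  imports Complex_Main "HOL-Combinatorics.Permutations"
begin

definition pairing_cost :: "('x \<Rightarrow> real) \<Rightarrow> ('x \<Rightarrow> 'x) \<Rightarrow> 'x set \<Rightarrow> ('x \<Rightarrow> 'x) \<Rightarrow> real" where
  "pairing_cost f \<phi> A \<pi> = (\<Sum>x\<in>A. \<bar>f (\<phi> (\<pi> x)) - f x\<bar>^2)"

definition wcm_D :: "('x \<Rightarrow> real) \<Rightarrow> ('x \<Rightarrow> 'x) \<Rightarrow> 'x set \<Rightarrow> real" where
  "wcm_D f \<phi> A = (\<Sum>x\<in>A. \<bar>f (\<phi> x) - f x\<bar>^2)"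

definition WCM :: "('x \<Rightarrow> 'x) \<Rightarrow> ('x \<Rightarrow> real) \<Rightarrow> 'x set \<Rightarrow> real" where
  "WCM \<phi> f A = 1 - sqrt (Min ((\<lambda>\<pi>. pairing_cost f \<phi> A \<pi>) ` {\<pi>. \<pi> permutes A}) / wcm_D f \<phi> A)"

definition emp_mean :: "'x set \<Rightarrow> ('x \<Rightarrow> real) \<Rightarrow> real" where
  "emp_mean A u = (\<Sum>x\<in>A. u x) / real (card A)"

definition emp_cov :: "'x set \<Rightarrow> ('x \<Rightarrow> real) \<Rightarrow> ('x \<Rightarrow> real) \<Rightarrow> real" where
  "emp_cov A u v = (\<Sum>x\<in>A. (u x - emp_mean A u) * (v x - emp_mean A v)) / real (card A)"

end

theory Submission
  imports Defs
begin

lemma sum_perm_inv: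
  assumes "p permutes A" shows "(\<Sum>x\<in>A. h (p x)) = (\<Sum>x\<in>A. (h x::real))"
  using sum.permute[OF assms, of h] by (simp add: comp_def)

lemma cost_expand:
  assumes "p permutes A"
  shows "pairing_cost f \<phi> A p = (\<Sum>x\<in>A. (f (\<phi> x))^2) - 2 * (\<Sum>x\<in>A. f x * f (\<phi> (p x))) + (\<Sum>x\<in>A. (f x)^2)"
proof -
  have "pairing_cost f \<phi> A p = (\<Sum>x\<in>A. (f (\<phi> (p x)))^2 - 2 * (f x * f (\<phi> (p x))) + (f x)^2)"
    unfolding pairing_cost_def by (intro sum.cong) (auto simp: power2_eq_square algebra_simps)
  also have "\<dots> = (\<Sum>x\<in>A. (f (\<phi> (p x)))^2) - 2 * (\<Sum>x\<in>A. f x * f (\<phi> (p x))) + (\<Sum>x\<in>A. (f x)^2)"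
    by (simp add: sum.distrib sum_subtractf sum_distrib_left)
  also have "(\<Sum>x\<in>A. (f (\<phi> (p x)))^2) = (\<Sum>x\<in>A. (f (\<phi> x))^2)"
    using sum_perm_inv[OF assms, of "\<lambda>y. (f (\<phi> y))^2"] by simp
  finally show ?thesis .
qed

lemma cov_expand:
  assumes "p permutes A" and "card A > 0"
  shows "emp_cov A f (\<lambda>x. f (\<phi> (p x))) = (\<Sum>x\<in>A. f x * f (\<phi> (p x))) / card A - emp_mean A f * emp_mean A (\<lambda>x. f (\<phi> x))"
proof -
  have mg: "emp_mean A (\<lambda>x. f (\<phi> (p x))) = emp_mean A (\<lambda>x. f (\<phi> x))"
    unfolding emp_mean_def using sum_perm_inv[OF assms(1), of "\<lambda>y. f (\<phi> y)"] by simp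
  define a where "a = emp_mean A f"
  define b where "b = emp_mean A (\<lambda>x. f (\<phi> x))"
  have sa: "(\<Sum>x\<in>A. f x) = a * card A" unfolding a_def emp_mean_def using assms(2) by simp
  have sb: "(\<Sum>x\<in>A. f (\<phi> (p x))) = b * card A" unfolding b_def emp_mean_def
    using assms(2) sum_perm_inv[OF assms(1), of "\<lambda>y. f (\<phi> y)"] by simp
  have "(\<Sum>x\<in>A. (f x - a) * (f (\<phi> (p x)) - b)) =
        (\<Sum>x\<in>A. f x * f (\<phi> (p x))) - b * (\<Sum>x\<in>A. f x) - a * (\<Sum>x\<in>A. f (\<phi> (p x))) + a * b * card A"
    by (simp add: algebra_simps sum.distrib sum_subtractf sum_distrib_left)
  also have "\<dots> = (\<Sum>x\<in>A. f x * f (\<phi> (p x))) - a * b * card A" using sa sb by simp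
  finally show ?thesis unfolding emp_cov_def mg using assms(2)
    by (simp add: a_def[symmetric] b_def[symmetric] diff_divide_distrib)
qed

theorem proposition2:
  fixes f :: "'x \<Rightarrow> real" and \<phi> :: "'x \<Rightarrow> 'x" and A :: "'x set"
  assumes "finite A"
    and "wcm_D f \<phi> A \<noteq> 0"
  shows "WCM \<phi> f A \<in> {0..1}
    \<and> (WCM \<phi> f A = 0 \<longleftrightarrow>
         (\<forall>\<pi>. \<pi> permutes A \<longrightarrow>
            emp_cov A f (\<lambda>x. f (\<phi> (\<pi> x))) \<le> emp_cov A f (\<lambda>x. f (\<phi> x))))
    \<and> (WCM \<phi> f A = 0 \<longleftrightarrow>
         pairing_cost f \<phi> A id = Min ((\<lambda>\<pi>. pairing_cost f \<phi> A \<pi>) ` {\<pi>. \<pi> permutes A}))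
    \<and> (WCM \<phi> f A = 1 \<longleftrightarrow>
         (\<exists>\<pi>. \<pi> permutes A \<and> \<pi> \<noteq> id \<and> (\<forall>x\<in>A. f x = f (\<phi> (\<pi> x)))))
    \<and> (\<forall>c::real. c > 0 \<longrightarrow> WCM \<phi> f A = WCM \<phi> (\<lambda>x. c * f x) A)"
proof -
  define P where "P = {\<pi>. \<pi> permutes A}"
  define C where "C = (\<lambda>\<pi>. pairing_cost f \<phi> A \<pi>)"
  define M where "M = Min (C ` P)"
  define D where "D = wcm_D f \<phi> A"
  have finP: "finite P" unfolding P_def using finite_permutations[OF assms(1)] .
  have idP: "id \<in> P" unfolding P_def by (simp add: permutes_id)
  have ne: "C ` P \<noteq> {}" using idP by auto
  have Cid: "C id = D" unfolding C_def D_def pairing_cost_def wcm_D_def by simp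
  have Cnn: "C p \<ge> 0" for p unfolding C_def pairing_cost_def by (intro sum_nonneg) auto
  have Dnn: "D \<ge> 0" using Cid Cnn by metis
  have Dpos: "D > 0" using Dnn assms(2) D_def by simp
  have Mle: "M \<le> C p" if "p \<in> P" for p unfolding M_def using finP that by simp
  have Min: "M \<in> C ` P" unfolding M_def using finP ne by simp
  have M0: "M \<ge> 0" using Min Cnn by auto
  have MD: "M \<le> D" using Mle[OF idP] Cid by simp
  have W: "WCM \<phi> f A = 1 - sqrt (M / D)" unfolding WCM_def M_def C_def P_def D_def by simp
  have q01: "0 \<le> M / D" "M / D \<le> 1" using M0 Dpos MD by (auto simp: divide_simps)
  have r1: "WCM \<phi> f A \<in> {0..1}" unfolding W using q01 by (auto simp: real_sqrt_le_1_iff)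
  have W0: "WCM \<phi> f A = 0 \<longleftrightarrow> M = D" unfolding W using Dpos q01
    by (auto simp: divide_simps)
  have W0': "M = D \<longleftrightarrow> (\<forall>p\<in>P. C id \<le> C p)"
    using Mle Min Cid MD by (auto intro: antisym)
  have cardpos: "card A > 0"
  proof (rule ccontr)
    assume "\<not> card A > 0"
    then have "A = {}" using assms(1) by simp
    then show False using assms(2) unfolding wcm_D_def by simp
  qed
  have r2: "(\<forall>p\<in>P. C id \<le> C p) \<longleftrightarrow> (\<forall>\<pi>. \<pi> permutes A \<longrightarrow>
            emp_cov A f (\<lambda>x. f (\<phi> (\<pi> x))) \<le> emp_cov A f (\<lambda>x. f (\<phi> x)))"
  proof -
    have "C id \<le> C p \<longleftrightarrow> emp_cov A f (\<lambda>x. f (\<phi> (p x))) \<le> emp_cov A f (\<lambda>x. f (\<phi> x))"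
      if "p \<in> P" for p
    proof -
      have pp: "p permutes A" using that P_def by simp
      have e1: "emp_cov A f (\<lambda>x. f (\<phi> x)) = emp_cov A f (\<lambda>x. f (\<phi> (id x)))" by simp
      show ?thesis unfolding C_def e1
        unfolding cost_expand[OF pp] cost_expand[OF permutes_id] cov_expand[OF pp cardpos]
          cov_expand[OF permutes_id cardpos]
        using cardpos by (auto simp: divide_simps)
    qed
    then show ?thesis unfolding P_def by auto
  qed
  have r3: "WCM \<phi> f A = 0 \<longleftrightarrow>
         pairing_cost f \<phi> A id = Min ((\<lambda>\<pi>. pairing_cost f \<phi> A \<pi>) ` {\<pi>. \<pi> permutes A})"
    using W0 Cid unfolding M_def C_def P_def by auto
  have W1: "WCM \<phi> f A = 1 \<longleftrightarrow> M = 0" unfolding W using Dpos by simp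
  have r4: "M = 0 \<longleftrightarrow> (\<exists>\<pi>. \<pi> permutes A \<and> \<pi> \<noteq> id \<and> (\<forall>x\<in>A. f x = f (\<phi> (\<pi> x))))"
  proof
    assume "M = 0"
    then obtain p where p: "p \<in> P" "C p = 0" using Min by auto
    have "\<forall>x\<in>A. \<bar>f (\<phi> (p x)) - f x\<bar>^2 = 0"
      using p(2) unfolding C_def pairing_cost_def
      using sum_nonneg_eq_0_iff[OF assms(1)] by (metis (no_types, lifting) zero_le_power2)
    then have h: "\<forall>x\<in>A. f x = f (\<phi> (p x))" by simp
    have "p \<noteq> id"
    proof
      assume "p = id" then show False using p(2) Cid Dpos by simp
    qed
    then show "\<exists>\<pi>. \<pi> permutes A \<and> \<pi> \<noteq> id \<and> (\<forall>x\<in>A. f x = f (\<phi> (\<pi> x)))"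
      using p(1) h P_def by auto
  next
    assume "\<exists>\<pi>. \<pi> permutes A \<and> \<pi> \<noteq> id \<and> (\<forall>x\<in>A. f x = f (\<phi> (\<pi> x)))"
    then obtain p where p: "p permutes A" "\<forall>x\<in>A. f x = f (\<phi> (p x))" by auto
    have "C p = 0" unfolding C_def pairing_cost_def using p(2) by simp
    then show "M = 0" using Mle[of p] p(1) P_def M0 by auto
  qed
  have r5: "WCM \<phi> f A = WCM \<phi> (\<lambda>x. c * f x) A" if c: "c > 0" for c
  proof -
    have Cc: "pairing_cost (\<lambda>x. c * f x) \<phi> A p = c^2 * C p" for p
      unfolding C_def pairing_cost_def sum_distrib_left
      by (intro sum.cong) (auto simp: power2_eq_square abs_mult algebra_simps)
    have Dc: "wcm_D (\<lambda>x. c * f x) \<phi> A = c^2 * D"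
      unfolding D_def wcm_D_def sum_distrib_left
      by (intro sum.cong) (auto simp: power2_eq_square abs_mult algebra_simps)
    have mono: "mono (\<lambda>t. c^2 * t)" using c by (intro monoI) simp
    have "Min ((\<lambda>p. pairing_cost (\<lambda>x. c * f x) \<phi> A p) ` P) = Min ((\<lambda>t. c^2 * t) ` (C ` P))"
      unfolding Cc image_image by simp
    also have "\<dots> = c^2 * M" unfolding M_def
      using mono_Min_commute[OF mono, of "C ` P"] finP ne by simp
    finally have "WCM \<phi> (\<lambda>x. c * f x) A = 1 - sqrt (c^2 * M / (c^2 * D))"
      unfolding WCM_def Dc P_def by simp
    then show ?thesis unfolding W using c by simp
  qed
  show ?thesis using r1 W0 W0' r2 r3 W1 r4 r5 by blast
qed

end
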